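(* For every $\varepsilon>0$ there exist $C>0$ and $\varepsilon'>0$ such that for all integers $n,m\ge1$, $$\#\mathcal F^{n,m}(\varepsilon)\le C\,2^{\varepsilon' n};$$ moreover $\varepsilon'$ can be chosen so that $\varepsilon'\to0$ as $\varepsilon\to0$.
   Context: For $\varepsilon>0$ and $k\ge1$, $\mathcal F_k(\varepsilon)$ is the set of pairs of sequences of positive integers $(i_1i_2\cdots i_k;\,j_1j_2\cdots j_k)$ with $i_1<\dots<i_k$ such that: (i) $i_{l+1}-i_l\ge j_l$ for each $1\le l<k$; (ii) $k\le\varepsilon i_k$; (iii) $i_k-\sum_{1\le l<k}j_l\le\varepsilon i_k$. $\mathcal F_k^{n,m}(\varepsilon)$ is the set of elements of $\mathcal F_k(\varepsilon)$ with $i_k=n$ and $j_k=m$, and $\mathcal F^{n,m}(\varepsilon)=\bigcup_{k=1}^n\mathcal F_k^{n,m}(\varepsilon)$. *)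

theory Defs
  imports Complex_Main
begin

text \<open>Sequences (i_1 ... i_k) and (j_1 ... j_k) are represented as lists of length k,
  indexed from 0, so i_l is \<open>is ! (l-1)\<close>.\<close>

definition famF :: "real \<Rightarrow> nat \<Rightarrow> (nat list \<times> nat list) set" where
  "famF eps k = {(is, js). k \<ge> 1 \<and> length is = k \<and> length js = k
     \<and> (\<forall>x\<in>set is. x > 0) \<and> (\<forall>x\<in>set js. x > 0)
     \<and> sorted_wrt (<) is
     \<and> (\<forall>l. l + 1 < k \<longrightarrow> is ! l + js ! l \<le> is ! (l + 1))
     \<and> real k \<le> eps * real (is ! (k - 1))
     \<and> real (is ! (k - 1)) - (\<Sum>l<k - 1. real (js ! l)) \<le> eps * real (is ! (k - 1))}"

definition famFk_nm :: "real \<Rightarrow> nat \<Rightarrow> nat \<Rightarrow> nat \<Rightarrow> (nat list \<times> nat list) set" where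
  "famFk_nm eps k n m = {(is, js) \<in> famF eps k. is ! (k - 1) = n \<and> js ! (k - 1) = m}"

definition famF_nm :: "real \<Rightarrow> nat \<Rightarrow> nat \<Rightarrow> (nat list \<times> nat list) set" where
  "famF_nm eps n m = (\<Union>k\<in>{1..n}. famFk_nm eps k n m)"

end

theory Submission
  imports Defs "HOL-Real_Asymp.Real_Asymp"
begin

lemma pow_sum_card:
  fixes x :: real
  assumes "finite A"
  shows "(\<Sum>S\<in>Pow A. x ^ card S) = (x + 1) ^ card A"
proof -
  have "(\<Prod>a\<in>A. x + 1) = (\<Sum>X\<in>Pow A. prod (\<lambda>_. x) X * prod (\<lambda>_. 1) (A - X))"
    by (rule prod_add) fact
  then show ?thesis by simp
qed

lemma sub_bound:
  fixes x b :: real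
  assumes A: "finite A" and x: "0 < x" "x \<le> 1"
  shows "real (card {S. S \<subseteq> A \<and> real (card S) \<le> b}) * x powr b \<le> (1 + x) ^ card A"
proof -
  let ?Sub = "{S. S \<subseteq> A \<and> real (card S) \<le> b}"
  have sub: "?Sub \<subseteq> Pow A" by auto
  have fin: "finite ?Sub" using A by (rule finite_subset[OF sub, OF finite_Pow_iff[THEN iffD2]])
  have "real (card ?Sub) * x powr b = (\<Sum>S\<in>?Sub. x powr b)" by simp
  also have "\<dots> \<le> (\<Sum>S\<in>?Sub. x ^ card S)"
  proof (rule sum_mono)
    fix S assume "S \<in> ?Sub"
    then have "real (card S) \<le> b" by simp
    then have "x powr b \<le> x powr (real (card S))"
      using x by (simp add: powr_mono')
    then show "x powr b \<le> x ^ card S" using x by (simp add: powr_realpow)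
  qed
  also have "\<dots> \<le> (\<Sum>S\<in>Pow A. x ^ card S)"
    by (rule sum_mono2) (use A sub x in auto)
  also have "\<dots> = (1 + x) ^ card A" using pow_sum_card[OF A] by (simp add: add.commute)
  finally show ?thesis .
qed

definition phi :: "nat list \<times> nat list \<Rightarrow> nat set \<times> nat set" where
  "phi p = (set (butlast (fst p)), set (map (\<lambda>l. fst p ! l + snd p ! l) [0..<length (fst p) - 1]))"

lemma memF:
  assumes "(xs, ys) \<in> famF_nm eps n m"
  shows "length xs = length ys \<and> length xs \<ge> 1 \<and> xs ! (length xs - 1) = n \<and> ys ! (length xs - 1) = m
    \<and> sorted_wrt (<) xs \<and> (\<forall>x\<in>set ys. x > 0) \<and> (\<forall>l. l + 1 < length xs \<longrightarrow> xs ! l + ys ! l \<le> xs ! (l + 1))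
    \<and> real (length xs) \<le> eps * real n"
  using assms unfolding famF_nm_def famFk_nm_def famF_def by auto

lemma map_sorted:
  fixes xs ys :: "nat list"
  assumes "length xs = length ys" "sorted_wrt (<) xs" "\<forall>x\<in>set ys. x > 0"
    "\<forall>l. l + 1 < length xs \<longrightarrow> xs ! l + ys ! l \<le> xs ! (l + 1)"
  shows "sorted_wrt (<) (map (\<lambda>l. xs ! l + ys ! l) [0..<length xs - 1])"
proof -
  have tr: "transp ((<) :: nat \<Rightarrow> nat \<Rightarrow> bool)" by (auto simp: transp_def)
  have "\<forall>i. Suc i < length (map (\<lambda>l. xs ! l + ys ! l) [0..<length xs - 1]) \<longrightarrow>
        map (\<lambda>l. xs ! l + ys ! l) [0..<length xs - 1] ! i < map (\<lambda>l. xs ! l + ys ! l) [0..<length xs - 1] ! Suc i"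
  proof (intro allI impI)
    fix i assume i: "Suc i < length (map (\<lambda>l. xs ! l + ys ! l) [0..<length xs - 1])"
    then have i2: "i + 1 < length xs" "Suc i < length ys" using assms(1) by auto
    have "ys ! Suc i > 0" using assms(3) i2 by auto
    then show "map (\<lambda>l. xs ! l + ys ! l) [0..<length xs - 1] ! i < map (\<lambda>l. xs ! l + ys ! l) [0..<length xs - 1] ! Suc i"
    proof -
      have a: "xs ! i + ys ! i \<le> xs ! Suc i" using assms(4)[rule_format, of i] i2 by simp
      have e1: "map (\<lambda>l. xs ! l + ys ! l) [0..<length xs - 1] ! i = xs ! i + ys ! i"
           and e2: "map (\<lambda>l. xs ! l + ys ! l) [0..<length xs - 1] ! Suc i = xs ! Suc i + ys ! Suc i"
        using i by auto
      have "xs ! Suc i < xs ! Suc i + ys ! Suc i" using \<open>ys ! Suc i > 0\<close> by simp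
      with a show ?thesis unfolding e1 e2 by (rule le_less_trans)
    qed
  qed
  then show ?thesis by (subst sorted_wrt_iff_nth_Suc_transp[OF tr])
qed

lemma phi_inj: "inj_on phi (famF_nm eps n m)"
proof (rule inj_onI)
  fix p q assume p: "p \<in> famF_nm eps n m" and q: "q \<in> famF_nm eps n m" and e: "phi p = phi q"
  obtain xs ys where pe: "p = (xs, ys)" by (cases p)
  obtain xs' ys' where qe: "q = (xs', ys')" by (cases q)
  note P = memF[OF p[unfolded pe]] and Q = memF[OF q[unfolded qe]]
  have s1: "sorted_wrt (<) (butlast xs)" "sorted_wrt (<) (butlast xs')"
    using P Q by (auto simp: butlast_conv_take)
  have "set (butlast xs) = set (butlast xs')" using e pe qe by (simp add: phi_def)
  then have "butlast xs = butlast xs'"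
    using s1 by (intro sorted_distinct_set_unique) (auto simp: strict_sorted_iff)
  moreover have "xs \<noteq> []" "xs' \<noteq> []" using P Q by auto
  moreover have "last xs = n" using P last_conv_nth[OF \<open>xs \<noteq> []\<close>] by (elim conjE) simp
  moreover have "last xs' = n" using Q last_conv_nth[OF \<open>xs' \<noteq> []\<close>] by (elim conjE) simp
  ultimately have ie: "xs = xs'" by (metis append_butlast_last_id)
  have s2: "sorted_wrt (<) (map (\<lambda>l. xs ! l + ys ! l) [0..<length xs - 1])"
    "sorted_wrt (<) (map (\<lambda>l. xs' ! l + ys' ! l) [0..<length xs' - 1])"
    subgoal using P by (intro map_sorted) blast+
    subgoal using Q by (intro map_sorted) blast+
    done
  have "set (map (\<lambda>l. xs ! l + ys ! l) [0..<length xs - 1]) = set (map (\<lambda>l. xs' ! l + ys' ! l) [0..<length xs' - 1])"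
    using e pe qe by (simp add: phi_def)
  then have me: "map (\<lambda>l. xs ! l + ys ! l) [0..<length xs - 1] = map (\<lambda>l. xs' ! l + ys' ! l) [0..<length xs' - 1]"
    using s2 by (intro sorted_distinct_set_unique) (auto simp: strict_sorted_iff)
  have "ys = ys'"
  proof (rule nth_equalityI)
    show "length ys = length ys'" using P Q ie by simp
    fix l assume l: "l < length ys"
    show "ys ! l = ys' ! l"
    proof (cases "l < length xs - 1")
      case True
      then have "map (\<lambda>l. xs ! l + ys ! l) [0..<length xs - 1] ! l = map (\<lambda>l. xs' ! l + ys' ! l) [0..<length xs' - 1] ! l"
        using me by simp
      then show ?thesis using True ie by simp
    next
      case False
      then have "l = length xs - 1" using l P by auto
      moreover have "ys ! (length xs - 1) = m" using P by blast
      moreover have "ys' ! (length xs' - 1) = m" using Q by blast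
      ultimately show ?thesis using ie by simp
    qed
  qed
  then show "p = q" using pe qe ie by simp
qed

lemma phi_maps:
  assumes "p \<in> famF_nm eps n m"
  shows "phi p \<in> {S. S \<subseteq> {0..n} \<and> real (card S) \<le> eps * real n} \<times> {S. S \<subseteq> {0..n} \<and> real (card S) \<le> eps * real n}"
proof -
  obtain xs ys where pe: "p = (xs, ys)" by (cases p)
  note P = memF[OF assms[unfolded pe]]
  have le: "\<And>i. i < length xs \<Longrightarrow> xs ! i \<le> n"
  proof -
    fix i assume i: "i < length xs"
    show "xs ! i \<le> n"
    proof (cases "i = length xs - 1")
      case True then show ?thesis using P by (elim conjE) simp
    next
      case False
      then have "i < length xs - 1" using i by simp
      then have "xs ! i < xs ! (length xs - 1)" using P i sorted_wrt_nth_less[of "(<)" xs i "length xs - 1"] by (elim conjE) simp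
      then show ?thesis using P by (elim conjE) simp
    qed
  qed
  have a: "set (butlast xs) \<subseteq> {0..n}"
    using le by (auto simp: in_set_conv_nth nth_butlast)
  have b: "set (map (\<lambda>l. xs ! l + ys ! l) [0..<length xs - 1]) \<subseteq> {0..n}"
  proof
    fix y assume "y \<in> set (map (\<lambda>l. xs ! l + ys ! l) [0..<length xs - 1])"
    then obtain l where l: "l < length xs - 1" "y = xs ! l + ys ! l" by auto
    then have "y \<le> xs ! (l + 1)" using P by auto
    also have "\<dots> \<le> n" using le l by auto
    finally show "y \<in> {0..n}" by simp
  qed
  have c1: "card (set (butlast xs)) \<le> length xs" 
    using card_length[of "butlast xs"] by simp
  have c2: "card (set (map (\<lambda>l. xs ! l + ys ! l) [0..<length xs - 1])) \<le> length xs"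
    using card_length[of "map (\<lambda>l. xs ! l + ys ! l) [0..<length xs - 1]"] by simp
  show ?thesis using a b c1 c2 P pe unfolding phi_def
    by (auto intro: order_trans[rotated])
qed

lemma card_F:
  "real (card (famF_nm eps n m)) \<le> real (card {S. S \<subseteq> {0..n} \<and> real (card S) \<le> eps * real n}) ^ 2"
proof -
  let ?S = "{S. S \<subseteq> {0..n} \<and> real (card S) \<le> eps * real n}"
  have fin: "finite ?S" by (rule finite_subset[of _ "Pow {0..n}"]) auto
  have "card (famF_nm eps n m) \<le> card (?S \<times> ?S)"
    by (rule card_inj_on_le[OF phi_inj]) (use phi_maps fin in \<open>auto intro!: image_subsetI simp del: mem_Sigma_iff\<close>)
  then show ?thesis by (simp add: card_cartesian_product power2_eq_square flip: of_nat_mult)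
qed

lemma bound_eps:
  fixes eps :: real and n :: nat
  assumes eps: "eps > 0"
  defines "x \<equiv> min eps 1"
  shows "real (card (famF_nm eps n m)) \<le> 4 * 2 powr ((2 * log 2 (1 + x) - 2 * eps * log 2 x) * real n)"
proof -
  let ?S = "{S. S \<subseteq> {0..n} \<and> real (card S) \<le> eps * real n}"
  have x: "0 < x" "x \<le> 1" using eps by (auto simp: x_def)
  define a where "a = (1 + x) powr real n"
  define c where "c = x powr (eps * real n)"
  have c: "c > 0" using x by (simp add: c_def)
  have a: "a \<ge> 0" by (simp add: a_def)
  have "real (card ?S) * c \<le> (1 + x) ^ card {0..n}"
    unfolding c_def by (rule sub_bound) (use x in auto)
  also have "\<dots> = (1 + x) * (1 + x) ^ n" by simp
  also have "\<dots> \<le> 2 * a" unfolding a_def using x by (simp add: powr_realpow)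
  finally have h: "real (card ?S) * c \<le> 2 * a" .
  have h2: "real (card ?S) \<le> 2 * a / c" using h c by (simp add: field_simps)
  have "real (card (famF_nm eps n m)) \<le> real (card ?S) ^ 2" by (rule card_F)
  also have "\<dots> \<le> (2 * a / c) ^ 2" using h2 by (intro power_mono) auto
  also have "\<dots> = 4 * (a ^ 2 / c ^ 2)" by (simp add: power_divide power_mult_distrib)
  also have "a ^ 2 / c ^ 2 = 2 powr ((2 * log 2 (1 + x) - 2 * eps * log 2 x) * real n)"
  proof -
    have "a ^ 2 = 2 powr (2 * log 2 (1 + x) * real n)"
    proof -
      have "2 powr (2 * log 2 (1 + x) * real n) = (2 powr log 2 (1 + x)) powr (2 * real n)"
        by (simp add: powr_powr algebra_simps)
      also have "\<dots> = (1 + x) powr (2 * real n)" using x by simp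
      also have "\<dots> = a ^ 2" unfolding a_def using x
        by (simp add: powr_realpow[symmetric] powr_powr mult.commute)
      finally show ?thesis by simp
    qed
    moreover have "c ^ 2 = 2 powr (2 * eps * log 2 x * real n)"
    proof -
      have "2 powr (2 * eps * log 2 x * real n) = (2 powr log 2 x) powr (2 * eps * real n)"
        by (simp add: powr_powr algebra_simps)
      also have "\<dots> = x powr (2 * eps * real n)" using x by simp
      also have "\<dots> = c ^ 2" unfolding c_def using x
        by (simp add: powr_realpow[symmetric] powr_powr algebra_simps)
      finally show ?thesis by simp
    qed
    ultimately show ?thesis by (simp add: powr_diff left_diff_distrib)
  qed
  finally show ?thesis .
qed

lemma g_lim: "((\<lambda>eps::real. 2 * log 2 (1 + min eps 1) - 2 * eps * log 2 (min eps 1)) \<longlongrightarrow> 0) (at_right 0)"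
proof -
  have "((\<lambda>eps::real. 2 * log 2 (1 + eps) - 2 * eps * log 2 eps) \<longlongrightarrow> 0) (at_right 0)"
    by real_asymp
  moreover have ev: "eventually (\<lambda>eps::real. 2 * log 2 (1 + eps) - 2 * eps * log 2 eps =
       2 * log 2 (1 + min eps 1) - 2 * eps * log 2 (min eps 1)) (at_right 0)"
    unfolding eventually_at_right_field by (intro exI[of _ 1]) auto
  ultimately show ?thesis using tendsto_cong[OF ev] by blast
qed

theorem lemma4p5:
  "\<exists>g :: real \<Rightarrow> real. (g \<longlongrightarrow> 0) (at_right 0) \<and>
     (\<forall>eps > 0. g eps > 0 \<and>
        (\<exists>C > 0. \<forall>n m :: nat. n \<ge> 1 \<longrightarrow> m \<ge> 1 \<longrightarrow>
           real (card (famF_nm eps n m)) \<le> C * 2 powr (g eps * real n)))"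
proof (rule exI, rule conjI)
  show "((\<lambda>eps::real. 2 * log 2 (1 + min eps 1) - 2 * eps * log 2 (min eps 1)) \<longlongrightarrow> 0) (at_right 0)"
    by (rule g_lim)
  show "\<forall>eps>0. 2 * log 2 (1 + min eps 1) - 2 * eps * log 2 (min eps 1) > 0 \<and> (\<exists>C>0. \<forall>n m :: nat. n \<ge> 1 \<longrightarrow> m \<ge> 1 \<longrightarrow>
     real (card (famF_nm eps n m)) \<le> C * 2 powr ((2 * log 2 (1 + min eps 1) - 2 * eps * log 2 (min eps 1)) * real n))"
  proof (intro allI impI conjI)
  fix eps :: real assume eps: "eps > 0"
  have x: "0 < min eps 1" "min eps 1 \<le> 1" using eps by auto
  have "log 2 (1 + min eps 1) > 0" using x by simp
  moreover have "log 2 (min eps 1) \<le> 0" using x by simp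
  moreover have "eps * log 2 (min eps 1) \<le> 0"
    using eps \<open>log 2 (min eps 1) \<le> 0\<close> by (intro mult_nonneg_nonpos) auto
  ultimately show "2 * log 2 (1 + min eps 1) - 2 * eps * log 2 (min eps 1) > 0"
    by linarith
  show "\<exists>C>0. \<forall>n m :: nat. n \<ge> 1 \<longrightarrow> m \<ge> 1 \<longrightarrow>
     real (card (famF_nm eps n m)) \<le> C * 2 powr ((2 * log 2 (1 + min eps 1) - 2 * eps * log 2 (min eps 1)) * real n)"
    using bound_eps[OF eps] by (intro exI[of _ 4]) auto
  qed
qed

end
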